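(* Let $K$ be a field, $\nu$ a valuation on $K[x]$, and $\mathbf{Q}\subseteq K[x]$ a set of monic nonconstant polynomials such that: (1) $\nu_Q$ is a valuation on $K[x]$ for every $Q\in\mathbf{Q}$; (2) for every finite nonempty subset $\mathcal F\subseteq\mathbf{Q}$ there exists $Q'\in\mathcal F$ with $\nu_{Q'}(Q)=\nu(Q)$ for every $Q\in\mathcal F$; (3) $\mathbf{Q}$ satisfies (GS1$^*$). Then $\mathbf{Q}$ is a complete set for $\nu$.
   Context: $\nu:K[x]\to\Gamma\cup\{\infty\}$ is a valuation ($\Gamma$ an ordered abelian group) with $\nu(f)=\infty$ only for $f=0$. For monic nonconstant $Q$, the $Q$-expansion of $f$ is the unique expression $f=f_0+f_1Q+\dots+f_nQ^n$ with each $f_i=0$ or $\deg f_i<\deg Q$, and $\nu_Q(f)=\min_i\nu(f_iQ^i)$. A set $\mathbf{Q}$ of monic nonconstant polynomials is complete for $\nu$ if for every nonconstant $f\in K[x]$ there is $Q\in\mathbf{Q}$ with $\deg Q\le\deg f$ and $\nu_Q(f)=\nu(f)$. For finitely supported $\lambda:\mathbf{Q}\to\mathbb{N}_0$ let $\mathbf{Q}^\lambda=\prod_{\lambda(Q)\neq0}Q^{\lambda(Q)}$. (GS1$^*$): for every $f\in K[x]$ there exist $r\ge0$, $a_1,\dots,a_r\in K$ and finitely supported $\lambda_1,\dots,\lambda_r:\mathbf{Q}\to\mathbb{N}_0$ with $f=\sum_{i=1}^ra_i\mathbf{Q}^{\lambda_i}$, $\nu(a_i\mathbf{Q}^{\lambda_i})\ge\nu(f)$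 for all $i$, and $\deg Q\le\deg f$ whenever $\lambda_i(Q)\ne0$ for some $i$. *)

theory Defs
  imports "HOL-Computational_Algebra.Polynomial"
begin

(* A valuation nu : K[x] -> Gamma \<union> {\<infinity>} with nu f = \<infinity> iff f = 0 is represented by
   its restriction v : K[x] -> Gamma to nonzero polynomials; the value v 0 is irrelevant
   and stands for \<infinity>. *)
definition valuation :: "('a::field poly \<Rightarrow> 'g::linordered_ab_group_add) \<Rightarrow> bool" where
  "valuation v \<longleftrightarrow>
     (\<forall>f g. f \<noteq> 0 \<longrightarrow> g \<noteq> 0 \<longrightarrow> v (f * g) = v f + v g) \<and>
     (\<forall>f g. f \<noteq> 0 \<longrightarrow> g \<noteq> 0 \<longrightarrow> f + g \<noteq> 0 \<longrightarrow> min (v f) (v g) \<le> v (f + g))"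

definition monic_nonconst :: "'a::field poly \<Rightarrow> bool" where
  "monic_nonconst Q \<longleftrightarrow> lead_coeff Q = 1 \<and> degree Q > 0"

definition qexp :: "'a::field poly \<Rightarrow> 'a poly \<Rightarrow> nat \<Rightarrow> 'a poly" where
  "qexp Q f = (THE c. finite {i. c i \<noteq> 0} \<and>
                      (\<forall>i. c i = 0 \<or> degree (c i) < degree Q) \<and>
                      f = (\<Sum>i\<in>{i. c i \<noteq> 0}. c i * Q ^ i))"

definition nuQ :: "('a::field poly \<Rightarrow> 'g::linordered_ab_group_add) \<Rightarrow> 'a poly \<Rightarrow> 'a poly \<Rightarrow> 'g" where
  "nuQ v Q f = Min {v (qexp Q f i * Q ^ i) | i. qexp Q f i \<noteq> 0}"

definition complete_set :: "('a::field poly \<Rightarrow> 'g::linordered_ab_group_add) \<Rightarrow> 'a poly set \<Rightarrow> bool" where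
  "complete_set v Qs \<longleftrightarrow>
     (\<forall>f. degree f > 0 \<longrightarrow> (\<exists>Q\<in>Qs. degree Q \<le> degree f \<and> nuQ v Q f = v f))"

definition Qpow :: "('a::field poly \<Rightarrow> nat) \<Rightarrow> 'a poly" where
  "Qpow lam = (\<Prod>Q\<in>{Q. lam Q \<noteq> 0}. Q ^ lam Q)"

(* GS1-star; nu(a_i Q^lambda_i) \<ge> nu(f) with the convention nu(0) = \<infinity> *)
definition GS1_star :: "('a::field poly \<Rightarrow> 'g::linordered_ab_group_add) \<Rightarrow> 'a poly set \<Rightarrow> bool" where
  "GS1_star v Qs \<longleftrightarrow>
     (\<forall>f. \<exists>(r::nat) (a::nat \<Rightarrow> 'a) (lam::nat \<Rightarrow> 'a poly \<Rightarrow> nat).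
        (\<forall>i<r. finite {Q. lam i Q \<noteq> 0} \<and> {Q. lam i Q \<noteq> 0} \<subseteq> Qs) \<and>
        f = (\<Sum>i<r. smult (a i) (Qpow (lam i))) \<and>
        (\<forall>i<r. smult (a i) (Qpow (lam i)) \<noteq> 0 \<longrightarrow>
                 f \<noteq> 0 \<and> v (smult (a i) (Qpow (lam i))) \<ge> v f) \<and>
        (\<forall>i<r. \<forall>Q. lam i Q \<noteq> 0 \<longrightarrow> degree Q \<le> degree f))"

end

theory Submission
  imports Defs
begin

lemma exp_exists:
  fixes Q :: "'a::field poly"
  assumes dQ: "degree Q > 0"
  shows "\<exists>c N. (\<forall>i\<ge>N. c i = 0) \<and> (\<forall>i. c i = 0 \<or> degree (c i) < degree Q) \<and>
           f = (\<Sum>i<N. c i * Q ^ i)"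
proof (induction "degree f" arbitrary: f rule: less_induct)
  case less
  have Q0: "Q \<noteq> 0" using dQ by auto
  define g where "g = f div Q"
  define r where "r = f mod Q"
  have fe: "f = g * Q + r" unfolding g_def r_def by simp
  have rdeg: "r = 0 \<or> degree r < degree Q" unfolding r_def using degree_mod_less[OF Q0] by blast
  show ?case
  proof (cases "g = 0")
    case True
    show ?thesis
      apply (rule exI[of _ "\<lambda>i. if i = 0 then r else 0"], rule exI[of _ 1])
      using rdeg fe True by auto
  next
    case False
    have "degree (g * Q) = degree g + degree Q" using False Q0 degree_mult_eq by blast
    moreover have "degree r < degree (g*Q)" using rdeg dQ calculation by auto
    ultimately have "degree f = degree g + degree Q" using fe
      by (metis add.commute degree_add_eq_left)
    hence "degree g < degree f" using dQ by simp
    from less(1)[OF this] obtain d M where d: "\<forall>i\<ge>M. d i = 0"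
      "\<forall>i. d i = 0 \<or> degree (d i) < degree Q" "g = (\<Sum>i<M. d i * Q ^ i)" by blast
    define c where "c = (\<lambda>i. if i = 0 then r else d (i - 1))"
    have "(\<Sum>i<Suc M. c i * Q ^ i) = r + (\<Sum>i<M. d i * Q ^ Suc i)"
      unfolding sum.lessThan_Suc_shift c_def by simp
    also have "\<dots> = r + (\<Sum>i<M. d i * Q ^ i) * Q"
      by (simp add: sum_distrib_left sum_distrib_right mult_ac)
    also have "\<dots> = f" using fe d(3) by simp
    finally show ?thesis
      apply -
      apply (rule exI[of _ c], rule exI[of _ "Suc M"])
      using d rdeg unfolding c_def by auto
  qed
qed

lemma exp_zero:
  fixes Q :: "'a::field poly"
  assumes dQ: "degree Q > 0"
    and "\<forall>i. e i = 0 \<or> degree (e i) < degree Q"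
    and "(\<Sum>i<N. e i * Q ^ i) = 0"
    and "i < N"
  shows "e i = 0"
  using assms(2-4)
proof (induction N arbitrary: e i)
  case 0 then show ?case by simp
next
  case (Suc N)
  have Q0: "Q \<noteq> 0" using dQ by auto
  define X where "X = (\<Sum>i<N. e (Suc i) * Q ^ i)"
  have "(\<Sum>i<Suc N. e i * Q ^ i) = e 0 + (\<Sum>i<N. e (Suc i) * Q ^ Suc i)"
    unfolding sum.lessThan_Suc_shift by simp
  also have "\<dots> = e 0 + Q * X" unfolding X_def
    by (simp add: sum_distrib_left mult.assoc mult.commute mult.left_commute)
  finally have eq: "e 0 = - (Q * X)" using Suc.prems(2) by (simp add: eq_neg_iff_add_eq_0)
  have e0: "e 0 = 0"
  proof (rule ccontr)
    assume ne: "e 0 \<noteq> 0"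
    hence "X \<noteq> 0" using eq by auto
    hence "degree (e 0) = degree X + degree Q" using eq Q0
      by (metis degree_minus degree_mult_eq mult.commute)
    thus False using Suc.prems(1) ne by (metis not_add_less2)
  qed
  hence "Q * X = 0" using eq by simp
  hence X0: "X = 0" using Q0 by simp
  show ?case
  proof (cases i)
    case 0 then show ?thesis using e0 by simp
  next
    case (Suc j)
    have "e (Suc j) = 0"
      apply (rule Suc.IH[of "\<lambda>i. e (Suc i)"])
      using Suc.prems X0 \<open>i = Suc j\<close> unfolding X_def by auto
    then show ?thesis using Suc by simp
  qed
qed

lemma supp_sum:
  fixes c :: "nat \<Rightarrow> 'a::field poly"
  assumes "\<forall>i\<ge>N. c i = 0"
  shows "(\<Sum>i\<in>{i. c i \<noteq> 0}. c i * Q ^ i) = (\<Sum>i<N. c i * Q ^ i)"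
  apply (rule sum.mono_neutral_left)
  using assms by (auto simp: not_less[symmetric])

lemma supp_fin:
  fixes c :: "nat \<Rightarrow> 'b::zero" and N :: nat
  assumes "\<forall>i\<ge>N. c i = 0" shows "finite {i. c i \<noteq> 0}"
proof -
  have "{i. c i \<noteq> 0} \<subseteq> {..<N}" proof
    fix x assume "x \<in> {i. c i \<noteq> 0}"
    hence "c x \<noteq> 0" by simp
    hence "\<not> x \<ge> N" using assms by blast
    thus "x \<in> {..<N}" by (simp add: not_le)
  qed
  thus ?thesis by (rule finite_subset) simp
qed

lemma exp_unique:
  fixes Q :: "'a::field poly"
  assumes dQ: "degree Q > 0"
    and c: "finite {i. c i \<noteq> 0}" "\<forall>i. c i = 0 \<or> degree (c i) < degree Q"
           "f = (\<Sum>i\<in>{i. c i \<noteq> 0}. c i * Q ^ i)"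
    and d: "finite {i. d i \<noteq> 0}" "\<forall>i. d i = 0 \<or> degree (d i) < degree Q"
           "f = (\<Sum>i\<in>{i. d i \<noteq> 0}. d i * Q ^ i)"
  shows "c = d"
proof
  fix i
  have "finite ({i. c i \<noteq> 0} \<union> {i. d i \<noteq> 0} \<union> {i})" using c(1) d(1) by simp
  then obtain N where N: "{i. c i \<noteq> 0} \<union> {i. d i \<noteq> 0} \<union> {i} \<subseteq> {..<N}"
    unfolding finite_nat_iff_bounded by blast
  have cN: "\<forall>j\<ge>N. c j = 0"
  proof (intro allI impI)
    fix j :: nat assume j: "j \<ge> N"
    show "c j = 0"
    proof (rule ccontr)
      assume "c j \<noteq> 0" hence "j \<in> {..<N}" using N by blast
      thus False using j by simp
    qed
  qed
  have dN: "\<forall>j\<ge>N. d j = 0"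
  proof (intro allI impI)
    fix j :: nat assume j: "j \<ge> N"
    show "d j = 0"
    proof (rule ccontr)
      assume "d j \<noteq> 0" hence "j \<in> {..<N}" using N by blast
      thus False using j by simp
    qed
  qed
  have iN: "i < N" using N by blast
  have "(\<Sum>j<N. (c j - d j) * Q ^ j) = (\<Sum>j<N. c j * Q ^ j) - (\<Sum>j<N. d j * Q ^ j)"
    by (simp add: left_diff_distrib sum_subtractf)
  also have "\<dots> = 0" unfolding supp_sum[OF cN, symmetric] supp_sum[OF dN, symmetric] c(3)[symmetric] d(3)[symmetric] by simp
  finally have z: "(\<Sum>j<N. (c j - d j) * Q ^ j) = 0" .
  have deg: "\<forall>j. c j - d j = 0 \<or> degree (c j - d j) < degree Q"
  proof
    fix j
    show "c j - d j = 0 \<or> degree (c j - d j) < degree Q"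
    proof (cases "c j - d j = 0")
      case False
      have "degree (c j) < degree Q" "degree (d j) < degree Q"
        using c(2)[rule_format, of j] d(2)[rule_format, of j] dQ by auto
      hence "degree (c j - d j) < degree Q" by (intro le_less_trans[OF degree_diff_le_max]) simp
      thus ?thesis by simp
    qed simp
  qed
  have "c i - d i = 0" by (rule exp_zero[OF dQ deg z iN])
  thus "c i = d i" by simp
qed

lemma qexp_prop:
  fixes Q :: "'a::field poly"
  assumes dQ: "degree Q > 0"
  shows "finite {i. qexp Q f i \<noteq> 0} \<and> (\<forall>i. qexp Q f i = 0 \<or> degree (qexp Q f i) < degree Q) \<and>
         f = (\<Sum>i\<in>{i. qexp Q f i \<noteq> 0}. qexp Q f i * Q ^ i)"
proof -
  obtain c N where cN: "\<forall>i\<ge>N. c i = 0" "\<forall>i. c i = 0 \<or> degree (c i) < degree Q"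
      "f = (\<Sum>i<N. c i * Q ^ i)" using exp_exists[OF dQ] by blast
  have ex: "\<exists>!c. finite {i. c i \<noteq> 0} \<and> (\<forall>i. c i = 0 \<or> degree (c i) < degree Q) \<and>
                      f = (\<Sum>i\<in>{i. c i \<noteq> 0}. c i * Q ^ i)"
  proof (rule ex1I[of _ c])
    have P1: "finite {i. c i \<noteq> 0}" by (rule supp_fin[OF cN(1)])
    have P3: "f = (\<Sum>i\<in>{i. c i \<noteq> 0}. c i * Q ^ i)"
      by (subst supp_sum[OF cN(1)]) (rule cN(3))
    show "finite {i. c i \<noteq> 0} \<and> (\<forall>i. c i = 0 \<or> degree (c i) < degree Q) \<and>
                      f = (\<Sum>i\<in>{i. c i \<noteq> 0}. c i * Q ^ i)"
      using P1 cN(2) P3 by (intro conjI)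
    fix d assume A: "finite {i. d i \<noteq> 0} \<and> (\<forall>i. d i = 0 \<or> degree (d i) < degree Q) \<and>
                      f = (\<Sum>i\<in>{i. d i \<noteq> 0}. d i * Q ^ i)"
    show "d = c" using exp_unique[OF dQ conjunct1[OF A] conjunct1[OF conjunct2[OF A]]
        conjunct2[OF conjunct2[OF A]] P1 cN(2) P3] .
  qed
  show ?thesis unfolding qexp_def by (rule theI'[OF ex])
qed

lemma qexp_const:
  fixes Q :: "'a::field poly"
  assumes dQ: "degree Q > 0"
  shows "qexp Q [:a:] = (\<lambda>i. if i = 0 then [:a:] else 0)"
proof -
  let ?c = "\<lambda>i::nat. if i = 0 then [:a:] else (0::'a poly)"
  have N: "\<forall>i\<ge>1. ?c i = 0" by auto
  show ?thesis
  proof (rule exp_unique[OF dQ])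
    show "finite {i. qexp Q [:a:] i \<noteq> 0}" using qexp_prop[OF dQ, of "[:a:]"] by blast
    show "\<forall>i. qexp Q [:a:] i = 0 \<or> degree (qexp Q [:a:] i) < degree Q" using qexp_prop[OF dQ, of "[:a:]"] by blast
    show "[:a:] = (\<Sum>i\<in>{i. qexp Q [:a:] i \<noteq> 0}. qexp Q [:a:] i * Q ^ i)" using qexp_prop[OF dQ, of "[:a:]"] by blast
    show "finite {i. ?c i \<noteq> 0}" by (rule finite_subset[of _ "{0}"]) auto
    show "\<forall>i. ?c i = 0 \<or> degree (?c i) < degree Q" using dQ by simp
    show "[:a:] = (\<Sum>i\<in>{i. ?c i \<noteq> 0}. ?c i * Q ^ i)" unfolding supp_sum[OF N] by simp
  qed
qed

lemma nuQ_const: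
  fixes Q :: "'a::field poly"
  assumes dQ: "degree Q > 0" and "a \<noteq> 0"
  shows "nuQ v Q [:a:] = v [:a:]"
proof -
  have "{v (qexp Q [:a:] i * Q ^ i) | i. qexp Q [:a:] i \<noteq> 0} = {v [:a:]}"
    unfolding qexp_const[OF dQ] using assms(2) by auto
  thus ?thesis unfolding nuQ_def by simp
qed

lemma val_sum_ge:
  assumes val: "valuation w" and fin: "finite S"
    and "\<forall>i\<in>S. t i \<noteq> 0 \<longrightarrow> w (t i) \<ge> m"
    and "sum t S \<noteq> 0"
  shows "w (sum t S) \<ge> m"
  using fin assms(3,4)
proof (induction S rule: finite_induct)
  case empty then show ?case by simp
next
  case (insert x S)
  show ?case
  proof (cases "t x = 0")
    case True then show ?thesis using insert by simp
  next
    case tx: False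
    show ?thesis
    proof (cases "sum t S = 0")
      case True then show ?thesis using insert tx by simp
    next
      case False
      have "min (w (t x)) (w (sum t S)) \<le> w (t x + sum t S)"
        using val tx False insert.prems(2) insert.hyps unfolding valuation_def by simp
      moreover have "w (t x) \<ge> m" using insert.prems tx by simp
      moreover have "w (sum t S) \<ge> m" using insert False by simp
      ultimately have "m \<le> w (t x + sum t S)" by (meson min.boundedI order_trans)
      moreover have "sum t (insert x S) = t x + sum t S" using insert.hyps by simp
      ultimately show ?thesis by simp
    qed
  qed
qed

lemma nuQ_le:
  fixes Q :: "'a::field poly"
  assumes dQ: "degree Q > 0" and val: "valuation v" and f0: "f \<noteq> 0"
  shows "nuQ v Q f \<le> v f"
proof -
  let ?c = "qexp Q f"
  let ?S = "{i. ?c i \<noteq> 0}"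
  have P: "finite ?S" "f = (\<Sum>i\<in>?S. ?c i * Q ^ i)" using qexp_prop[OF dQ] by blast+
  have Q0: "Q \<noteq> 0" using dQ by auto
  let ?A = "{v (?c i * Q ^ i) | i. ?c i \<noteq> 0}"
  have Afin: "finite ?A" using P(1) by (simp add: setcompr_eq_image)
  have "v (\<Sum>i\<in>?S. ?c i * Q ^ i) \<ge> Min ?A"
  proof (rule val_sum_ge[OF val P(1)])
    show "(\<Sum>i\<in>?S. ?c i * Q ^ i) \<noteq> 0" using P(2) f0 by simp
    show "\<forall>i\<in>?S. ?c i * Q ^ i \<noteq> 0 \<longrightarrow> Min ?A \<le> v (?c i * Q ^ i)"
    proof (intro ballI impI)
      fix i assume "i \<in> ?S"
      hence "v (?c i * Q ^ i) \<in> ?A" by blast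
      thus "Min ?A \<le> v (?c i * Q ^ i)" by (rule Min_le[OF Afin])
    qed
  qed
  hence "v f \<ge> Min ?A" using P(2) by simp
  thus ?thesis unfolding nuQ_def .
qed

lemma val_agree_prod:
  assumes vw: "valuation w" and vv: "valuation v" and fin: "finite S"
    and ag: "\<forall>Q\<in>S. Q \<noteq> 0 \<and> w Q = v Q"
  shows "(\<Prod>Q\<in>S. Q ^ lam Q) \<noteq> 0 \<and> w (\<Prod>Q\<in>S. Q ^ lam Q) = v (\<Prod>Q\<in>S. Q ^ lam Q)"
  using fin ag
proof (induction S rule: finite_induct)
  case empty
  have "w 1 = w (1*1)" by simp
  also have "\<dots> = w 1 + w 1" using vw unfolding valuation_def by (metis one_neq_zero)
  finally have w1: "w 1 = 0" by simp
  have "v 1 = v (1*1)" by simp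
  also have "\<dots> = v 1 + v 1" using vv unfolding valuation_def by (metis one_neq_zero)
  finally have v1: "v 1 = 0" by simp
  show ?case using w1 v1 by simp
next
  case (insert x S)
  have pw: "\<And>n::nat. x ^ n \<noteq> 0 \<and> w (x ^ n) = v (x ^ n)"
  proof -
    fix n :: nat show "x ^ n \<noteq> 0 \<and> w (x ^ n) = v (x ^ n)"
    proof (induction n)
      case 0
      have "w 1 = w (1*1)" by simp
      also have "\<dots> = w 1 + w 1" using vw unfolding valuation_def by (metis one_neq_zero)
      finally have w1: "w 1 = 0" by simp
      have "v 1 = v (1*1)" by simp
      also have "\<dots> = v 1 + v 1" using vv unfolding valuation_def by (metis one_neq_zero)
      finally have v1: "v 1 = 0" by simp
      then show ?case using w1 by simp
    next
      case (Suc n)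
      have x0: "x \<noteq> 0" and wx: "w x = v x" using insert.prems by auto
      have "w (x * x ^ n) = w x + w (x ^ n)" using vw x0 Suc unfolding valuation_def by blast
      moreover have "v (x * x ^ n) = v x + v (x ^ n)" using vv x0 Suc unfolding valuation_def by blast
      ultimately show ?case using Suc wx x0 by simp
    qed
  qed
  have IH: "(\<Prod>Q\<in>S. Q ^ lam Q) \<noteq> 0 \<and> w (\<Prod>Q\<in>S. Q ^ lam Q) = v (\<Prod>Q\<in>S. Q ^ lam Q)"
    using insert by simp
  let ?P = "\<Prod>Q\<in>S. Q ^ lam Q"
  have e: "(\<Prod>Q\<in>insert x S. Q ^ lam Q) = x ^ lam x * ?P" using insert.hyps by simp
  have "w (x ^ lam x * ?P) = w (x ^ lam x) + w ?P" using vw pw IH unfolding valuation_def by blast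
  moreover have "v (x ^ lam x * ?P) = v (x ^ lam x) + v ?P" using vv pw IH unfolding valuation_def by blast
  ultimately show ?case unfolding e using pw IH by simp
qed

theorem proposition5p3:
  fixes v :: "'a::field poly \<Rightarrow> 'g::linordered_ab_group_add"
    and Qs :: "'a poly set"
  assumes "valuation v"
    and "\<forall>Q\<in>Qs. monic_nonconst Q"
    and "\<forall>Q\<in>Qs. valuation (nuQ v Q)"
    and "\<forall>F. finite F \<longrightarrow> F \<noteq> {} \<longrightarrow> F \<subseteq> Qs \<longrightarrow>
           (\<exists>Q'\<in>F. \<forall>Q\<in>F. nuQ v Q' Q = v Q)"
    and "GS1_star v Qs"
  shows "complete_set v Qs"
  unfolding complete_set_def
proof (intro allI impI)
  fix f :: "'a poly"
  assume df: "degree f > 0"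
  hence f0: "f \<noteq> 0" by auto
  obtain r :: nat and a :: "nat \<Rightarrow> 'a" and lam :: "nat \<Rightarrow> 'a poly \<Rightarrow> nat" where G: "\<forall>i<r. finite {Q. lam i Q \<noteq> 0} \<and> {Q. lam i Q \<noteq> 0} \<subseteq> Qs"
     "f = (\<Sum>i<r. smult (a i) (Qpow (lam i)))"
     "\<forall>i<r. smult (a i) (Qpow (lam i)) \<noteq> 0 \<longrightarrow> f \<noteq> 0 \<and> v (smult (a i) (Qpow (lam i))) \<ge> v f"
     "\<forall>i<r. \<forall>Q. lam i Q \<noteq> 0 \<longrightarrow> degree Q \<le> degree f"
    using assms(5)[unfolded GS1_star_def, rule_format, of f] by blast
  define F where "F = (\<Union>i<r. {Q. lam i Q \<noteq> 0})"
  have Ffin: "finite F" "F \<subseteq> Qs" using G(1) unfolding F_def by auto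
  have Fne: "F \<noteq> {}"
  proof
    assume "F = {}"
    hence "\<forall>i<r. Qpow (lam i) = 1" unfolding F_def Qpow_def by auto
    hence "f = (\<Sum>i<r. [:a i:])" using G(2) by simp
    moreover have "(\<Sum>i<r. [:a i:]) = [:\<Sum>i<r. a i:]" by (induction r) auto
    ultimately have "degree f = 0" by simp
    thus False using df by simp
  qed
  obtain Q' where Q': "Q' \<in> F" "\<forall>Q\<in>F. nuQ v Q' Q = v Q" using assms(4) Ffin Fne by blast
  have Q'Qs: "Q' \<in> Qs" using Q' Ffin by auto
  have dQ': "degree Q' > 0" using assms(2) Q'Qs unfolding monic_nonconst_def by auto
  have valw: "valuation (nuQ v Q')" using assms(3) Q'Qs by blast
  have degle: "degree Q' \<le> degree f" using Q'(1) G(4) unfolding F_def by auto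
  have ge: "nuQ v Q' f \<ge> v f"
  proof -
    have "nuQ v Q' (\<Sum>i<r. smult (a i) (Qpow (lam i))) \<ge> v f"
    proof (rule val_sum_ge[OF valw])
      show "(\<Sum>i<r. smult (a i) (Qpow (lam i))) \<noteq> 0" using G(2) f0 by simp
      show "\<forall>i\<in>{..<r}. smult (a i) (Qpow (lam i)) \<noteq> 0 \<longrightarrow> v f \<le> nuQ v Q' (smult (a i) (Qpow (lam i)))"
      proof (intro ballI impI)
        fix i assume i: "i \<in> {..<r}" and nz: "smult (a i) (Qpow (lam i)) \<noteq> 0"
        have ai: "a i \<noteq> 0" using nz by auto
        have ag: "\<forall>Q\<in>{Q. lam i Q \<noteq> 0}. Q \<noteq> 0 \<and> nuQ v Q' Q = v Q"
        proof
          fix Q assume "Q \<in> {Q. lam i Q \<noteq> 0}"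
          hence "Q \<in> F" using i unfolding F_def by auto
          thus "Q \<noteq> 0 \<and> nuQ v Q' Q = v Q" using Q'(2) Ffin assms(2)
            unfolding monic_nonconst_def by fastforce
        qed
        have pp: "Qpow (lam i) \<noteq> 0 \<and> nuQ v Q' (Qpow (lam i)) = v (Qpow (lam i))"
          unfolding Qpow_def by (rule val_agree_prod[OF valw assms(1)]) (use G(1) i ag in auto)
        have sm: "smult (a i) (Qpow (lam i)) = [:a i:] * Qpow (lam i)" by simp
        have c0: "[:a i:] \<noteq> 0" using ai by simp
        have "nuQ v Q' (smult (a i) (Qpow (lam i))) = nuQ v Q' [:a i:] + nuQ v Q' (Qpow (lam i))"
          unfolding sm using valw c0 pp unfolding valuation_def by blast
        also have "\<dots> = v [:a i:] + v (Qpow (lam i))" using nuQ_const[OF dQ' ai] pp by simp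
        also have "\<dots> = v ([:a i:] * Qpow (lam i))"
          using assms(1) c0 pp unfolding valuation_def by metis
        also have "\<dots> = v (smult (a i) (Qpow (lam i)))" using sm by simp
        finally show "v f \<le> nuQ v Q' (smult (a i) (Qpow (lam i)))" using G(3) i nz by auto
      qed
    qed simp
    thus ?thesis using G(2) by simp
  qed
  have "nuQ v Q' f = v f" using ge nuQ_le[OF dQ' assms(1) f0] by simp
  thus "\<exists>Q\<in>Qs. degree Q \<le> degree f \<and> nuQ v Q f = v f" using Q'Qs degle by blast
qed

end
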